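(* Let $M$ be an $m\times n$ $0/1$-matrix and let $B$ be a block of $M$ of size $r\times c$. Given the data structure $\Phi(B)$, and given the set of entries of the input boundary $B^-$ that are reachable from $(1,1)$, one can determine in $O(r+c)$ time the set of entries of the output boundary $B^+$ that are reachable from $(1,1)$.
   Context: Entries of $M$ are indexed $(a,b)$, rows increasing from bottom to top, columns left to right. A path from $(k,l)$ to $(i,j)$ is a sequence of $1$-entries starting at $(k,l)$ and ending at $(i,j)$ in which each step goes from $(a,b)$ to $(a+1,b)$, $(a,b+1)$ or $(a+1,b+1)$; $(i,j)$ is reachable from $(k,l)$ if such a path exists. A block $B$ is the submatrix formed by rows $r^-\le a\le r^+$ and columns $s^-\le b\le s^+$. Its input boundary $B^-$ consists of the entries in row $r^-$ or column $s^-$ of $B$, ordered: first row $r^-$ from column $s^+$ down to $s^-$, then the remaining entries of column $s^-$ from row $r^-+1$ up to $r^+$. Its output boundary $B^+$ consists of the entries in row $r^+$ or column $s^+$ of $B$, ordered: first column $s^+$ from row $r^-$ up to $r^+$, then the remaining entries of row $r^+$ from column $s^+-1$ down to $s^-$. The data structure $\Phi(B)$ stores: (1) for each $1$-entry $i$ of $B^-$, the first entry $\sigma_A(i)$ and the last entry $\sigma_Z(i)$ of $B^+$ (in output-boundary order) that are reachable from $i$; (2) for each $1$-entry $j$ of $B^+$, a flag $f(j)$ indicating whether $j$ is reachable from some entry of $B^-$, a list $L_A(j)$ of the $1$-entries $i\in B^-$ with $\sigma_A(i)=j$, and a list $L_Z(j)$ of the $1$-entries $i\in B^-$ with $\sigma_Z(i)=j$.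 Running time is measured in the RAM model with constant-time access to these stored items. *)

theory Defs
  imports Main
begin

text \<open>A 0/1-matrix of size m x n is modelled as a predicate M a b (True = entry 1),
  with rows 1..m (bottom to top) and columns 1..n (left to right).\<close>

definition is_one :: "nat \<Rightarrow> nat \<Rightarrow> (nat \<Rightarrow> nat \<Rightarrow> bool) \<Rightarrow> nat \<times> nat \<Rightarrow> bool" where
  "is_one m n M x \<longleftrightarrow> 1 \<le> fst x \<and> fst x \<le> m \<and> 1 \<le> snd x \<and> snd x \<le> n \<and> M (fst x) (snd x)"

definition mstep :: "nat \<times> nat \<Rightarrow> nat \<times> nat \<Rightarrow> bool" where
  "mstep x y \<longleftrightarrow> y = (fst x + 1, snd x) \<or> y = (fst x, snd x + 1) \<or> y = (fst x + 1, snd x + 1)"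

definition is_path :: "nat \<Rightarrow> nat \<Rightarrow> (nat \<Rightarrow> nat \<Rightarrow> bool) \<Rightarrow> (nat \<times> nat) list \<Rightarrow> bool" where
  "is_path m n M p \<longleftrightarrow> p \<noteq> [] \<and> (\<forall>x\<in>set p. is_one m n M x)
     \<and> (\<forall>k. Suc k < length p \<longrightarrow> mstep (p ! k) (p ! Suc k))"

definition reachable :: "nat \<Rightarrow> nat \<Rightarrow> (nat \<Rightarrow> nat \<Rightarrow> bool) \<Rightarrow> nat \<times> nat \<Rightarrow> nat \<times> nat \<Rightarrow> bool" where
  "reachable m n M x y \<longleftrightarrow> (\<exists>p. is_path m n M p \<and> hd p = x \<and> last p = y)"

definition bnd_in :: "nat \<Rightarrow> nat \<Rightarrow> nat \<Rightarrow> nat \<Rightarrow> (nat \<times> nat) list" where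
  "bnd_in rm rp sm sp = map (\<lambda>b. (rm, b)) (rev [sm..<Suc sp]) @ map (\<lambda>a. (a, sm)) [Suc rm..<Suc rp]"

definition bnd_out :: "nat \<Rightarrow> nat \<Rightarrow> nat \<Rightarrow> nat \<Rightarrow> (nat \<times> nat) list" where
  "bnd_out rm rp sm sp = map (\<lambda>a. (a, sp)) [rm..<Suc rp] @ map (\<lambda>b. (rp, b)) (rev [sm..<sp])"

text \<open>The data structure Phi(B); boundary entries are referred to by their (0-based) position
  in the respective boundary order.  sigA/sigZ are None if the input entry is not a 1-entry
  or reaches no output entry.\<close>
record phi =
  sigA :: "nat \<Rightarrow> nat option"
  sigZ :: "nat \<Rightarrow> nat option"
  flag :: "nat \<Rightarrow> bool"
  LA :: "nat \<Rightarrow> nat list"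
  LZ :: "nat \<Rightarrow> nat list"

definition is_phi :: "nat \<Rightarrow> nat \<Rightarrow> (nat \<Rightarrow> nat \<Rightarrow> bool) \<Rightarrow> nat \<Rightarrow> nat \<Rightarrow> nat \<Rightarrow> nat \<Rightarrow> phi \<Rightarrow> bool" where
  "is_phi m n M rm rp sm sp P \<longleftrightarrow>
    (let Bi = bnd_in rm rp sm sp; Bo = bnd_out rm rp sm sp;
         R = (\<lambda>k. {q. q < length Bo \<and> reachable m n M (Bi ! k) (Bo ! q)}) in
     (\<forall>k < length Bi.
        (if is_one m n M (Bi ! k) \<and> R k \<noteq> {}
         then sigA P k = Some (Min (R k)) \<and> sigZ P k = Some (Max (R k))
         else sigA P k = None \<and> sigZ P k = None))
   \<and> (\<forall>q < length Bo.
        flag P q = (\<exists>k < length Bi. reachable m n M (Bi ! k) (Bo ! q))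
      \<and> distinct (LA P q) \<and> set (LA P q) = {k. k < length Bi \<and> sigA P k = Some q}
      \<and> distinct (LZ P q) \<and> set (LZ P q) = {k. k < length Bi \<and> sigZ P k = Some q}))"

text \<open>The linear-time sweep over the output boundary, with an explicit RAM step count
  (constant work per visited boundary position and per list element read).
  Arguments: Phi, the reachable input positions R, current output position j,
  remaining positions, counter of currently open intervals.\<close>
fun sweep :: "phi \<Rightarrow> (nat \<Rightarrow> bool) \<Rightarrow> nat \<Rightarrow> nat \<Rightarrow> nat \<Rightarrow> nat list \<times> nat" where
  "sweep P R j 0 cnt = ([], 1)"
| "sweep P R j (Suc k) cnt =
     (let cnt1 = cnt + length (filter R (LA P j));
          cnt2 = cnt1 - length (filter R (LZ P j));
          res = sweep P R (Suc j) k cnt2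
      in ((if flag P j \<and> 0 < cnt1 then j # fst res else fst res),
          snd res + 1 + length (LA P j) + length (LZ P j)))"

end

theory Submission imports Defs begin

definition edge :: "nat \<Rightarrow> nat \<Rightarrow> (nat \<Rightarrow> nat \<Rightarrow> bool) \<Rightarrow> nat \<times> nat \<Rightarrow> nat \<times> nat \<Rightarrow> bool" where
  "edge m n M u v \<longleftrightarrow> is_one m n M u \<and> is_one m n M v \<and> mstep u v"

lemma is_path_Cons2:
  "is_path m n M (a#b#r) \<longleftrightarrow> is_one m n M a \<and> mstep a b \<and> is_path m n M (b#r)"
proof
  assume h: "is_path m n M (a#b#r)"
  have "mstep a b" using h unfolding is_path_def by (metis Suc_less_eq length_Cons nth_Cons_0 nth_Cons_Suc zero_less_Suc)
  moreover have "is_path m n M (b#r)"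
    unfolding is_path_def
  proof (intro conjI allI impI)
    fix k assume "Suc k < length (b#r)"
    then have "Suc (Suc k) < length (a#b#r)" by simp
    then have "mstep ((a#b#r) ! Suc k) ((a#b#r) ! Suc (Suc k))" using h unfolding is_path_def by blast
    then show "mstep ((b#r) ! k) ((b#r) ! Suc k)" by simp
  qed (use h in \<open>auto simp: is_path_def\<close>)
  ultimately show "is_one m n M a \<and> mstep a b \<and> is_path m n M (b#r)" using h by (auto simp: is_path_def)
next
  assume h: "is_one m n M a \<and> mstep a b \<and> is_path m n M (b#r)"
  show "is_path m n M (a#b#r)"
    unfolding is_path_def
  proof (intro conjI allI impI)
    fix k assume k: "Suc k < length (a#b#r)"
    show "mstep ((a#b#r) ! k) ((a#b#r) ! Suc k)"
    proof (cases k)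
      case 0 then show ?thesis using h by simp
    next
      case (Suc k')
      then have "Suc k' < length (b#r)" using k by simp
      then show ?thesis using h Suc unfolding is_path_def by simp
    qed
  qed (use h in \<open>auto simp: is_path_def\<close>)
qed

lemma is_path_single: "is_path m n M [a] \<longleftrightarrow> is_one m n M a"
  by (auto simp: is_path_def)

lemma path_imp_rt: "is_path m n M p \<Longrightarrow> is_one m n M (hd p) \<and> (edge m n M)\<^sup>*\<^sup>* (hd p) (last p)"
proof (induction p rule: induct_list012)
  case 1 then show ?case by (simp add: is_path_def)
next
  case (2 x) then show ?case by (simp add: is_path_single)
next
  case (3 x y zs)
  then have a: "is_one m n M x" "mstep x y" "is_path m n M (y#zs)" using is_path_Cons2 by blast+
  with 3 have "is_one m n M y" "(edge m n M)\<^sup>*\<^sup>* y (last (y#zs))" by auto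
  with a have "(edge m n M)\<^sup>*\<^sup>* x (last (y#zs))"
    by (meson converse_rtranclp_into_rtranclp edge_def)
  then show ?case using a by simp
qed

lemma rt_imp_path: "(edge m n M)\<^sup>*\<^sup>* x y \<Longrightarrow> is_one m n M x \<Longrightarrow> \<exists>p. is_path m n M p \<and> hd p = x \<and> last p = y"
proof (induction rule: converse_rtranclp_induct)
  case base then show ?case by (intro exI[of _ "[y]"]) (simp add: is_path_single)
next
  case (step x z)
  then have "is_one m n M z" by (simp add: edge_def)
  with step obtain p where p: "is_path m n M p" "hd p = z" "last p = y" by blast
  then obtain r where r: "p = z # r" by (cases p) (auto simp: is_path_def)
  show ?case
    apply (intro exI[of _ "x#p"])
    using p r step by (auto simp: is_path_Cons2 edge_def)
qed

lemma reach_iff: "reachable m n M x y \<longleftrightarrow> is_one m n M x \<and> (edge m n M)\<^sup>*\<^sup>* x y"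
  unfolding reachable_def using path_imp_rt rt_imp_path by metis

lemma mstep_bounds: "mstep u v \<Longrightarrow> fst u \<le> fst v \<and> fst v \<le> Suc (fst u) \<and> snd u \<le> snd v \<and> snd v \<le> Suc (snd u)"
  by (auto simp: mstep_def)

lemma rt_mono: "(edge m n M)\<^sup>*\<^sup>* u v \<Longrightarrow> fst u \<le> fst v \<and> snd u \<le> snd v"
  by (induction rule: rtranclp_induct) (auto dest!: mstep_bounds simp: edge_def)

lemma cross:
  assumes "(edge m n M ^^ N) x y" "(edge m n M ^^ N') x' y'"
    "fst x' \<le> fst x" "snd x \<le> snd x'" "fst y \<le> fst y'" "snd y' \<le> snd y"
  shows "\<exists>w. (edge m n M)\<^sup>*\<^sup>* x w \<and> (edge m n M)\<^sup>*\<^sup>* w y \<and> (edge m n M)\<^sup>*\<^sup>* x' w \<and> (edge m n M)\<^sup>*\<^sup>* w y'"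
  using assms
proof (induction "N+N'" arbitrary: N N' x x' rule: less_induct)
  case less
  let ?E = "edge m n M"
  have xy: "?E\<^sup>*\<^sup>* x y" and xy': "?E\<^sup>*\<^sup>* x' y'" using less.prems relpowp_imp_rtranclp by metis+
  show ?case
  proof (cases "x = x'")
    case True then show ?thesis using xy xy' by blast
  next
    case ne: False
    show ?thesis
    proof (cases "fst x' < fst x \<and> N' > 0")
      case True
      then obtain N0 where N0: "N' = Suc N0" by (cases N') auto
      then obtain z where z: "?E x' z" "(?E ^^ N0) z y'" using less.prems(2) relpowp_Suc_D2 by metis
      have "fst z \<le> fst x" "snd x \<le> snd z" using z(1) True less.prems by (auto dest!: mstep_bounds simp: edge_def)
      then obtain w where "?E\<^sup>*\<^sup>* x w \<and> ?E\<^sup>*\<^sup>* w y \<and> ?E\<^sup>*\<^sup>* z w \<and> ?E\<^sup>*\<^sup>* w y'"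
        using less.hyps[of N N0 x z] less.prems z N0 by auto
      then show ?thesis using z(1) by (meson converse_rtranclp_into_rtranclp)
    next
      case c1: False
      show ?thesis
      proof (cases "snd x < snd x' \<and> N > 0")
        case True
        then obtain N0 where N0: "N = Suc N0" by (cases N) auto
        then obtain z where z: "?E x z" "(?E ^^ N0) z y" using less.prems(1) relpowp_Suc_D2 by metis
        have "fst x' \<le> fst z" "snd z \<le> snd x'" using z(1) True less.prems by (auto dest!: mstep_bounds simp: edge_def)
        then obtain w where "?E\<^sup>*\<^sup>* z w \<and> ?E\<^sup>*\<^sup>* w y \<and> ?E\<^sup>*\<^sup>* x' w \<and> ?E\<^sup>*\<^sup>* w y'"
          using less.hyps[of N0 N' z x'] less.prems z N0 by auto
        then show ?thesis using z(1) by (meson converse_rtranclp_into_rtranclp)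
      next
        case c2: False
        have m1: "fst x \<le> fst y" "snd x \<le> snd y" using rt_mono[OF xy] by auto
        have m2: "fst x' \<le> fst y'" "snd x' \<le> snd y'" using rt_mono[OF xy'] by auto
        have "fst x' < fst x \<or> snd x < snd x'" using ne less.prems(3,4) by (metis le_neq_implies_less prod.collapse)
        then show ?thesis
        proof
          assume h: "fst x' < fst x"
          then have "N' = 0" using c1 by auto
          then have "x' = y'" using less.prems(2) by simp
          then show ?thesis using h less.prems m1 by simp
        next
          assume h: "snd x < snd x'"
          then have "N = 0" using c2 by auto
          then have "x = y" using less.prems(1) by simp
          then show ?thesis using h less.prems m2 by simp
        qed
      qed
    qed
  qed
qed


lemma len_bi: "length (bnd_in rm rp sm sp) = (Suc sp - sm) + (rp - rm)"
  unfolding bnd_in_def length_append length_map length_rev length_upt by simp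

lemma len_bo: "length (bnd_out rm rp sm sp) = (Suc rp - rm) + (sp - sm)"
  unfolding bnd_out_def length_append length_map length_rev length_upt by simp

lemma nth_bi: "sm \<le> sp \<Longrightarrow> k < length (bnd_in rm rp sm sp) \<Longrightarrow>
  bnd_in rm rp sm sp ! k = (if k < Suc sp - sm then (rm, sp - k) else (Suc rm + (k - (Suc sp - sm)), sm))"
  by (auto simp: bnd_in_def nth_append rev_nth simp del: upt_Suc)

lemma nth_bo: "rm \<le> rp \<Longrightarrow> k < length (bnd_out rm rp sm sp) \<Longrightarrow>
  bnd_out rm rp sm sp ! k = (if k < Suc rp - rm then (rm + k, sp) else (rp, sp - Suc (k - (Suc rp - rm))))"
  by (auto simp: bnd_out_def nth_append rev_nth simp del: upt_Suc)

lemma bi_mono: "sm \<le> sp \<Longrightarrow> k \<le> k' \<Longrightarrow> k' < length (bnd_in rm rp sm sp) \<Longrightarrow>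
  fst (bnd_in rm rp sm sp ! k) \<le> fst (bnd_in rm rp sm sp ! k') \<and> snd (bnd_in rm rp sm sp ! k') \<le> snd (bnd_in rm rp sm sp ! k)"
  by (simp add: nth_bi) (auto simp: len_bi)

lemma bo_mono: "rm \<le> rp \<Longrightarrow> sm \<le> sp \<Longrightarrow> k \<le> k' \<Longrightarrow> k' < length (bnd_out rm rp sm sp) \<Longrightarrow>
  fst (bnd_out rm rp sm sp ! k) \<le> fst (bnd_out rm rp sm sp ! k') \<and> snd (bnd_out rm rp sm sp ! k') \<le> snd (bnd_out rm rp sm sp ! k)"
  by (simp add: nth_bo) (auto simp: len_bo)

lemma bo_in_block: "rm \<le> rp \<Longrightarrow> sm \<le> sp \<Longrightarrow> q < length (bnd_out rm rp sm sp) \<Longrightarrow>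
  rm \<le> fst (bnd_out rm rp sm sp ! q) \<and> fst (bnd_out rm rp sm sp ! q) \<le> rp \<and>
  sm \<le> snd (bnd_out rm rp sm sp ! q) \<and> snd (bnd_out rm rp sm sp ! q) \<le> sp"
  by (simp add: nth_bo) (auto simp: len_bo)

lemma in_bi: "rm \<le> fst v \<Longrightarrow> fst v \<le> rp \<Longrightarrow> sm \<le> snd v \<Longrightarrow> snd v \<le> sp \<Longrightarrow> fst v = rm \<or> snd v = sm \<Longrightarrow>
  v \<in> set (bnd_in rm rp sm sp)"
proof -
  assume h: "rm \<le> fst v" "fst v \<le> rp" "sm \<le> snd v" "snd v \<le> sp" "fst v = rm \<or> snd v = sm"
  show ?thesis
  proof (cases "fst v = rm")
    case True
    then have "v \<in> set (map (\<lambda>b. (rm, b)) (rev [sm..<Suc sp]))" using h by (cases v) auto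
    then show ?thesis unfolding bnd_in_def by simp
  next
    case False
    then have "v \<in> set (map (\<lambda>a. (a, sm)) [Suc rm..<Suc rp])" using h by (cases v) auto
    then show ?thesis unfolding bnd_in_def by simp
  qed
qed

lemma entry:
  assumes "(edge m n M)\<^sup>*\<^sup>* x y" "rm \<le> fst y" "sm \<le> snd y"
  shows "fst x \<le> rm \<or> snd x \<le> sm \<Longrightarrow> \<exists>v. (edge m n M)\<^sup>*\<^sup>* x v \<and> (edge m n M)\<^sup>*\<^sup>* v y \<and> rm \<le> fst v \<and> sm \<le> snd v \<and> (fst v = rm \<or> snd v = sm)"
  using assms(1)
proof (induction rule: converse_rtranclp_induct)
  case base then show ?case using assms by (intro exI[of _ y]) auto
next
  case (step x z)
  show ?case
  proof (cases "rm \<le> fst x \<and> sm \<le> snd x")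
    case True then show ?thesis using step by (intro exI[of _ x]) (auto intro: converse_rtranclp_into_rtranclp)
  next
    case False
    then have "fst z \<le> rm \<or> snd z \<le> sm" using step(1) by (auto dest!: mstep_bounds simp: edge_def)
    then show ?thesis using step by (meson converse_rtranclp_into_rtranclp)
  qed
qed


lemma sweep_cost: "snd (sweep P R j r cnt) = 1 + (\<Sum>i\<in>{j..<j+r}. 1 + length (LA P i) + length (LZ P i))"
proof (induction r arbitrary: j cnt)
  case 0 then show ?case by simp
next
  case (Suc r)
  show ?case by (simp add: Let_def Suc sum.atLeast_Suc_lessThan)
qed

definition SS :: "phi \<Rightarrow> (nat \<Rightarrow> bool) \<Rightarrow> nat \<Rightarrow> nat \<Rightarrow> nat set" where
  "SS P R LBi j = {k. k < LBi \<and> R k \<and> (\<exists>a z. sigA P k = Some a \<and> sigZ P k = Some z \<and> a < j \<and> j \<le> z)}"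

lemma len_filter_distinct: "distinct xs \<Longrightarrow> length (filter R xs) = card {x \<in> set xs. R x}"
  by (metis distinct_card distinct_filter set_filter)

lemma sweep_set:
  assumes hA: "\<forall>q<LBo. distinct (LA P q) \<and> set (LA P q) = {k. k<LBi \<and> sigA P k = Some q}"
    and hZ: "\<forall>q<LBo. distinct (LZ P q) \<and> set (LZ P q) = {k. k<LBi \<and> sigZ P k = Some q}"
    and hAZ: "\<forall>k<LBi. (\<forall>a. sigA P k = Some a \<longrightarrow> (\<exists>z. sigZ P k = Some z \<and> a \<le> z)) \<and> (\<forall>z. sigZ P k = Some z \<longrightarrow> (\<exists>a. sigA P k = Some a))"
  shows "j + r = LBo \<Longrightarrow> cnt = card (SS P R LBi j) \<Longrightarrow> set (fst (sweep P R j r cnt)) =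
     {q. j \<le> q \<and> q < LBo \<and> flag P q \<and> (\<exists>k<LBi. R k \<and> (\<exists>a z. sigA P k = Some a \<and> sigZ P k = Some z \<and> a \<le> q \<and> q \<le> z))}"
proof (induction r arbitrary: j cnt)
  case 0 then show ?case by auto
next
  case (Suc r)
  define T where "T = {k. k < LBi \<and> R k \<and> (\<exists>a z. sigA P k = Some a \<and> sigZ P k = Some z \<and> a \<le> j \<and> j \<le> z)}"
  define Aj where "Aj = {k. k < LBi \<and> sigA P k = Some j \<and> R k}"
  define Zj where "Zj = {k. k < LBi \<and> sigZ P k = Some j \<and> R k}"
  have jl: "j < LBo" using Suc.prems by simp
  have fin: "finite (SS P R LBi j)" "finite Aj" "finite Zj" "finite T"
    by (auto simp: SS_def Aj_def Zj_def T_def)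
  have c1: "length (filter R (LA P j)) = card Aj"
    using hA jl by (simp add: len_filter_distinct Aj_def)
  have c2: "length (filter R (LZ P j)) = card Zj"
    using hZ jl by (simp add: len_filter_distinct Zj_def)
  have TU: "T = SS P R LBi j \<union> Aj"
    using hAZ unfolding T_def SS_def Aj_def by auto
  have disj: "SS P R LBi j \<inter> Aj = {}" unfolding SS_def Aj_def by auto
  have cT: "cnt + length (filter R (LA P j)) = card T"
    using Suc.prems c1 TU disj fin card_Un_disjoint by metis
  have ZT: "Zj \<subseteq> T" using hAZ unfolding Zj_def T_def by fastforce
  have TZ: "T - Zj = SS P R LBi (Suc j)"
  proof (rule set_eqI)
    fix k
    show "k \<in> T - Zj \<longleftrightarrow> k \<in> SS P R LBi (Suc j)"
    proof (cases "sigA P k")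
      case None then show ?thesis unfolding T_def Zj_def SS_def
        using hAZ by auto
    next
      case (Some a)
      show ?thesis
      proof (cases "sigZ P k")
        case None then show ?thesis unfolding T_def Zj_def SS_def by auto
      next
        case (Some z)
        have "(a \<le> j \<and> j \<le> z \<and> z \<noteq> j) \<longleftrightarrow> (a < Suc j \<and> Suc j \<le> z)" by auto
        then show ?thesis unfolding T_def Zj_def SS_def using \<open>sigA P k = Some a\<close> Some by auto
      qed
    qed
  qed
  have cS: "card T - card Zj = card (SS P R LBi (Suc j))"
    using TZ ZT fin card_Diff_subset by metis
  have IH: "set (fst (sweep P R (Suc j) r (card (SS P R LBi (Suc j))))) =
     {q. Suc j \<le> q \<and> q < LBo \<and> flag P q \<and> (\<exists>k<LBi. R k \<and> (\<exists>a z. sigA P k = Some a \<and> sigZ P k = Some z \<and> a \<le> q \<and> q \<le> z))}"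
    using Suc.IH Suc.prems by simp
  have pos: "0 < card T \<longleftrightarrow> (\<exists>k<LBi. R k \<and> (\<exists>a z. sigA P k = Some a \<and> sigZ P k = Some z \<and> a \<le> j \<and> j \<le> z))"
    using fin(4) unfolding T_def by (auto simp: card_gt_0_iff)
  have e: "fst (sweep P R j (Suc r) cnt) = (if flag P j \<and> 0 < card T then j # fst (sweep P R (Suc j) r (card (SS P R LBi (Suc j)))) else fst (sweep P R (Suc j) r (card (SS P R LBi (Suc j)))))"
    by (simp only: sweep.simps Let_def cT c2 cS) simp
  define Q where "Q = (\<lambda>q. flag P q \<and> (\<exists>k<LBi. R k \<and> (\<exists>a z. sigA P k = Some a \<and> sigZ P k = Some z \<and> a \<le> q \<and> q \<le> z)))"
  have sp: "{q. j \<le> q \<and> q < LBo \<and> Q q} = (if Q j then {j} else {}) \<union> {q. Suc j \<le> q \<and> q < LBo \<and> Q q}"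
    using jl by (auto simp: Suc_le_eq le_less)
  have IH': "set (fst (sweep P R (Suc j) r (card (SS P R LBi (Suc j))))) = {q. Suc j \<le> q \<and> q < LBo \<and> Q q}"
    using IH unfolding Q_def .
  have pos': "(flag P j \<and> 0 < card T) = Q j" using pos unfolding Q_def by simp
  have "set (fst (sweep P R j (Suc r) cnt)) = {q. j \<le> q \<and> q < LBo \<and> Q q}"
    unfolding e sp pos' by (simp add: IH')
  then show ?case unfolding Q_def .
qed


lemma sum_len_le:
  fixes LBo LBi :: nat
  assumes "\<forall>q<LBo. distinct (g q) \<and> set (g q) = {k. k<LBi \<and> f k = Some q}"
  shows "(\<Sum>i\<in>{..<LBo}. length (g i)) \<le> LBi"
proof -
  have "(\<Sum>i\<in>{..<LBo}. length (g i)) = (\<Sum>i\<in>{..<LBo}. card {k. k<LBi \<and> f k = Some i})"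
    using assms by (intro sum.cong) (auto simp flip: distinct_card)
  also have "\<dots> = card (\<Union>i\<in>{..<LBo}. {k. k<LBi \<and> f k = Some i})"
    by (rule card_UN_disjoint[symmetric]) auto
  also have "\<dots> \<le> card {..<LBi}" by (rule card_mono) auto
  finally show ?thesis by simp
qed

lemma rt_one: "(edge m n M)\<^sup>*\<^sup>* x y \<Longrightarrow> is_one m n M x \<Longrightarrow> is_one m n M y"
  by (induction rule: rtranclp_induct) (auto simp: edge_def)

lemma reach_trans: "reachable m n M x y \<Longrightarrow> reachable m n M y z \<Longrightarrow> reachable m n M x z"
  unfolding reach_iff by auto


theorem lemma1:
  "\<exists>K::nat. \<forall>m n M rm rp sm sp P R.
     1 \<le> rm \<and> rm \<le> rp \<and> rp \<le> m \<and> 1 \<le> sm \<and> sm \<le> sp \<and> sp \<le> n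
     \<and> is_phi m n M rm rp sm sp P
     \<and> (\<forall>k < length (bnd_in rm rp sm sp).
           R k = reachable m n M (1, 1) (bnd_in rm rp sm sp ! k))
     \<longrightarrow> (let res = sweep P R 0 (length (bnd_out rm rp sm sp)) 0 in
           set (fst res) = {q. q < length (bnd_out rm rp sm sp)
                               \<and> reachable m n M (1, 1) (bnd_out rm rp sm sp ! q)}
         \<and> snd res \<le> K * ((rp + 1 - rm) + (sp + 1 - sm)))"
proof (intro exI[of _ 4] allI impI)
  fix m n M rm rp sm sp P R
  assume h: "1 \<le> rm \<and> rm \<le> rp \<and> rp \<le> m \<and> 1 \<le> sm \<and> sm \<le> sp \<and> sp \<le> n
     \<and> is_phi m n M rm rp sm sp P
     \<and> (\<forall>k < length (bnd_in rm rp sm sp).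
           R k = reachable m n M (1, 1) (bnd_in rm rp sm sp ! k))"
  define Bi where "Bi = bnd_in rm rp sm sp"
  define Bo where "Bo = bnd_out rm rp sm sp"
  define RR where "RR = (\<lambda>k. {q. q < length Bo \<and> reachable m n M (Bi ! k) (Bo ! q)})"
  have b: "1 \<le> rm" "rm \<le> rp" "1 \<le> sm" "sm \<le> sp" using h by auto
  have hR: "\<forall>k<length Bi. R k = reachable m n M (1, 1) (Bi ! k)" using h Bi_def by simp
  have phi: "\<forall>k < length Bi.
        (if is_one m n M (Bi ! k) \<and> RR k \<noteq> {}
         then sigA P k = Some (Min (RR k)) \<and> sigZ P k = Some (Max (RR k))
         else sigA P k = None \<and> sigZ P k = None)"
    and phi2: "\<forall>q < length Bo.
        flag P q = (\<exists>k < length Bi. reachable m n M (Bi ! k) (Bo ! q))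
      \<and> distinct (LA P q) \<and> set (LA P q) = {k. k < length Bi \<and> sigA P k = Some q}
      \<and> distinct (LZ P q) \<and> set (LZ P q) = {k. k < length Bi \<and> sigZ P k = Some q}"
    using h unfolding is_phi_def Let_def Bi_def Bo_def RR_def by auto
  have finRR: "finite (RR k)" for k unfolding RR_def by auto
  have sigSome: "sigA P k = Some a \<Longrightarrow> k < length Bi \<Longrightarrow> is_one m n M (Bi ! k) \<and> RR k \<noteq> {} \<and> a = Min (RR k) \<and> sigZ P k = Some (Max (RR k))" for k a
    using phi by (metis option.distinct(1) option.inject)
  have sigSomeZ: "sigZ P k = Some z \<Longrightarrow> k < length Bi \<Longrightarrow> is_one m n M (Bi ! k) \<and> RR k \<noteq> {} \<and> z = Max (RR k) \<and> sigA P k = Some (Min (RR k))" for k z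
    using phi by (metis option.distinct(1) option.inject)
  have hAZ: "\<forall>k<length Bi. (\<forall>a. sigA P k = Some a \<longrightarrow> (\<exists>z. sigZ P k = Some z \<and> a \<le> z)) \<and> (\<forall>z. sigZ P k = Some z \<longrightarrow> (\<exists>a. sigA P k = Some a))"
  proof (intro allI impI conjI)
    fix k a assume k: "k < length Bi" and "sigA P k = Some a"
    then have s: "is_one m n M (Bi ! k) \<and> RR k \<noteq> {} \<and> a = Min (RR k) \<and> sigZ P k = Some (Max (RR k))" using sigSome by blast
    then show "\<exists>z. sigZ P k = Some z \<and> a \<le> z" using finRR[of k] by (metis Max_ge Min_in)
  next
    fix k z assume "k < length Bi" "sigZ P k = Some z"
    then show "\<exists>a. sigA P k = Some a" using sigSomeZ by blast
  qed
  have SS0: "card (SS P R (length Bi) 0) = 0" unfolding SS_def by simp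
  have sweepset: "set (fst (sweep P R 0 (length Bo) 0)) = {q. 0 \<le> q \<and> q < length Bo \<and> flag P q \<and> (\<exists>k<length Bi. R k \<and> (\<exists>a z. sigA P k = Some a \<and> sigZ P k = Some z \<and> a \<le> q \<and> q \<le> z))}"
    by (rule sweep_set[where LBi = "length Bi"]) (use phi2 hAZ SS0 in auto)
  have charac: "(flag P q \<and> (\<exists>k<length Bi. R k \<and> (\<exists>a z. sigA P k = Some a \<and> sigZ P k = Some z \<and> a \<le> q \<and> q \<le> z)))
      \<longleftrightarrow> reachable m n M (1,1) (Bo ! q)" if q: "q < length Bo" for q
  proof
    assume "flag P q \<and> (\<exists>k<length Bi. R k \<and> (\<exists>a z. sigA P k = Some a \<and> sigZ P k = Some z \<and> a \<le> q \<and> q \<le> z))"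
    then obtain k' k a z where k': "k' < length Bi" "reachable m n M (Bi ! k') (Bo ! q)"
      and k: "k < length Bi" "R k" "sigA P k = Some a" "sigZ P k = Some z" "a \<le> q" "q \<le> z"
      using phi2 q by blast
    have s: "is_one m n M (Bi ! k) \<and> RR k \<noteq> {} \<and> a = Min (RR k) \<and> z = Max (RR k)"
      using sigSome[OF k(3) k(1)] k(4) by simp
    then have "a \<in> RR k" "z \<in> RR k" using finRR[of k] Min_in Max_in by auto
    then have ra: "reachable m n M (Bi ! k) (Bo ! a)" "a < length Bo"
      and rz: "reachable m n M (Bi ! k) (Bo ! z)" "z < length Bo" unfolding RR_def by auto
    have r0: "reachable m n M (1,1) (Bi ! k)" using hR k by simp
    then have one11: "is_one m n M (1,1)" by (simp add: reach_iff)
    let ?E = "edge m n M"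
    show "reachable m n M (1,1) (Bo ! q)"
    proof (cases "q = a \<or> q = z \<or> k = k'")
      case True then show ?thesis using ra rz r0 k' reach_trans by metis
    next
      case False
      show ?thesis
      proof (cases "k' < k")
        case True
        with False k have aq: "a < q" by auto
        obtain N where N: "(?E ^^ N) (Bi ! k) (Bo ! a)" using ra reach_iff rtranclp_imp_relpowp by metis
        obtain N' where N': "(?E ^^ N') (Bi ! k') (Bo ! q)" using k' reach_iff rtranclp_imp_relpowp by metis
        have m1: "fst (Bi ! k') \<le> fst (Bi ! k) \<and> snd (Bi ! k) \<le> snd (Bi ! k')"
          using bi_mono[OF b(4), of k' k rm rp] True k(1) Bi_def by simp
        have m2: "fst (Bo ! a) \<le> fst (Bo ! q) \<and> snd (Bo ! q) \<le> snd (Bo ! a)"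
          using bo_mono[OF b(2) b(4), of a q] aq q Bo_def by simp
        obtain w where w: "?E\<^sup>*\<^sup>* (Bi ! k) w" "?E\<^sup>*\<^sup>* w (Bo ! q)"
          using cross[OF N N'] m1 m2 by blast
        have "?E\<^sup>*\<^sup>* (1,1) (Bi ! k)" using r0 reach_iff by blast
        then show ?thesis using w one11 reach_iff by (meson rtranclp_trans)
      next
        case c: False
        with False have kk: "k < k'" by auto
        from False k have qz: "q < z" by auto
        obtain N where N: "(?E ^^ N) (Bi ! k') (Bo ! q)" using k' reach_iff rtranclp_imp_relpowp by metis
        obtain N' where N': "(?E ^^ N') (Bi ! k) (Bo ! z)" using rz reach_iff rtranclp_imp_relpowp by metis
        have m1: "fst (Bi ! k) \<le> fst (Bi ! k') \<and> snd (Bi ! k') \<le> snd (Bi ! k)"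
          using bi_mono[OF b(4), of k k' rm rp] kk k'(1) Bi_def by simp
        have m2: "fst (Bo ! q) \<le> fst (Bo ! z) \<and> snd (Bo ! z) \<le> snd (Bo ! q)"
          using bo_mono[OF b(2) b(4), of q z] qz rz Bo_def by simp
        obtain w where w: "?E\<^sup>*\<^sup>* (Bi ! k) w" "?E\<^sup>*\<^sup>* w (Bo ! q)"
          using cross[OF N N'] m1 m2 by blast
        have "?E\<^sup>*\<^sup>* (1,1) (Bi ! k)" using r0 reach_iff by blast
        then show ?thesis using w one11 reach_iff by (meson rtranclp_trans)
      qed
    qed
  next
    assume r: "reachable m n M (1,1) (Bo ! q)"
    let ?E = "edge m n M"
    have one11: "is_one m n M (1,1)" and rt: "?E\<^sup>*\<^sup>* (1,1) (Bo ! q)" using r reach_iff by auto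
    have blk: "rm \<le> fst (Bo ! q)" "fst (Bo ! q) \<le> rp" "sm \<le> snd (Bo ! q)" "snd (Bo ! q) \<le> sp"
      using bo_in_block[OF b(2) b(4), of q] q Bo_def by auto
    obtain v where v: "?E\<^sup>*\<^sup>* (1,1) v" "?E\<^sup>*\<^sup>* v (Bo ! q)" "rm \<le> fst v" "sm \<le> snd v" "fst v = rm \<or> snd v = sm"
      using entry[OF rt blk(1) blk(3)] b by auto
    have "fst v \<le> rp" "snd v \<le> sp" using rt_mono[OF v(2)] blk by auto
    then have "v \<in> set Bi" using in_bi v Bi_def by blast
    then obtain k where k: "k < length Bi" "Bi ! k = v" by (metis in_set_conv_nth)
    have onev: "is_one m n M v" using rt_one v(1) one11 by blast
    have Rk: "R k" using hR k v(1) one11 reach_iff by auto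
    have rvq: "reachable m n M (Bi ! k) (Bo ! q)" using k onev v(2) reach_iff by auto
    then have qR: "q \<in> RR k" unfolding RR_def using q by simp
    then have sA: "sigA P k = Some (Min (RR k))" "sigZ P k = Some (Max (RR k))"
    proof -
      have "RR k \<noteq> {}" using qR by blast
      moreover have "is_one m n M (Bi ! k)" using k onev by simp
      ultimately show "sigA P k = Some (Min (RR k))" "sigZ P k = Some (Max (RR k))"
        using phi k(1) by auto
    qed
    have "Min (RR k) \<le> q" "q \<le> Max (RR k)" using qR finRR[of k] by auto
    then show "flag P q \<and> (\<exists>k<length Bi. R k \<and> (\<exists>a z. sigA P k = Some a \<and> sigZ P k = Some z \<and> a \<le> q \<and> q \<le> z))"
      using phi2 q k rvq Rk sA by blast
  qed
  have setres: "set (fst (sweep P R 0 (length Bo) 0)) = {q. q < length Bo \<and> reachable m n M (1, 1) (Bo ! q)}"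
    unfolding sweepset using charac by auto
  have cost: "snd (sweep P R 0 (length Bo) 0) = 1 + (\<Sum>i\<in>{..<length Bo}. 1 + length (LA P i) + length (LZ P i))"
    using sweep_cost[of P R 0 "length Bo" 0] by (simp add: atLeast0LessThan)
  have sLA: "(\<Sum>i\<in>{..<length Bo}. length (LA P i)) \<le> length Bi"
    by (rule sum_len_le[where f = "sigA P"]) (use phi2 in auto)
  have sLZ: "(\<Sum>i\<in>{..<length Bo}. length (LZ P i)) \<le> length Bi"
    by (rule sum_len_le[where f = "sigZ P"]) (use phi2 in auto)
  have "snd (sweep P R 0 (length Bo) 0) = 1 + length Bo + (\<Sum>i\<in>{..<length Bo}. length (LA P i)) + (\<Sum>i\<in>{..<length Bo}. length (LZ P i))"
    unfolding cost by (simp only: sum.distrib) simp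
  also have "\<dots> \<le> 1 + length Bo + 2 * length Bi" using sLA sLZ by linarith
  also have "\<dots> \<le> 4 * ((rp + 1 - rm) + (sp + 1 - sm))"
    unfolding Bo_def Bi_def len_bi len_bo using b by simp
  finally have "snd (sweep P R 0 (length Bo) 0) \<le> 4 * ((rp + 1 - rm) + (sp + 1 - sm))" .
  then show "let res = sweep P R 0 (length (bnd_out rm rp sm sp)) 0 in
           set (fst res) = {q. q < length (bnd_out rm rp sm sp)
                               \<and> reachable m n M (1, 1) (bnd_out rm rp sm sp ! q)}
         \<and> snd res \<le> 4 * ((rp + 1 - rm) + (sp + 1 - sm))"
    using setres unfolding Let_def Bo_def by simp
qed

end
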